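(* Consider $n$ projects with revenue functions $R_j:\{0,1,2\}\to\mathbb{R}$, $R_j(0)=0$ (i.e., $m=2$). Put $a_j=R_j(1)$, $b_j=R_j(2)-R_j(1)$, and split the projects into $A=\{j: a_j>b_j\}$ and $B=\{j: a_j\le b_j\}$. Let $f(k)$ be the maximum of $\sum_{j\in A}R_j(x_j)$ over $x_j\in\{0,1,2\}$ with $\sum_{j\in A}x_j=k$, and $g(k)$ the maximum of $\sum_{j\in B}R_j(x_j)$ over $x_j\in\{0,1,2\}$ with $\sum_{j\in B}x_j=k$. Index the projects of $B$ as $1,\dots,|B|$ in non-increasing order of $R_i(2)=a_i+b_i$. Then: (1) $f(k)$ equals the sum of the $k$ largest elements of the multiset $\{a_i: i\in A\}\cup\{b_i: i\in A\}$; (2) for $0\le k\le 2|B|$, $g(k)=\sum_{i=1}^{k/2}R_i(2)$ if $k$ is even, and if $k$ is odd, $$g(k)=\max\Bigl(g(k-1)+\max_{\frac{k+3}{2}\le i\le |B|}a_i,\ \ g(k+1)-\min_{1\le i\le \frac{k+1}{2}}b_i\Bigr),$$ where indices refer to projects of $B$ and a maximum over an empty range is $-\infty$.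
   Context: All quantities are as defined in the claim; $k$ ranges over $0\le k\le 2|A|$ for $f$ and $0\le k\le 2|B|$ for $g$. *)

theory Defs
  imports Main "HOL-Library.FuncSet" "HOL-Library.Multiset" "HOL-Library.Extended_Real"
begin

text \<open>Projects are indexed by the natural numbers below n; R j x is the revenue
  of project j when x units are allocated to it (only x in {0,1,2} matters).\<close>

definition alpha :: "(nat \<Rightarrow> nat \<Rightarrow> real) \<Rightarrow> nat \<Rightarrow> real" where
  "alpha R j = R j 1"

definition beta :: "(nat \<Rightarrow> nat \<Rightarrow> real) \<Rightarrow> nat \<Rightarrow> real" where
  "beta R j = R j 2 - R j 1"

definition setA :: "nat \<Rightarrow> (nat \<Rightarrow> nat \<Rightarrow> real) \<Rightarrow> nat set" where
  "setA n R = {j. j < n \<and> alpha R j > beta R j}"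

definition setB :: "nat \<Rightarrow> (nat \<Rightarrow> nat \<Rightarrow> real) \<Rightarrow> nat set" where
  "setB n R = {j. j < n \<and> alpha R j \<le> beta R j}"

definition best :: "(nat \<Rightarrow> nat \<Rightarrow> real) \<Rightarrow> nat set \<Rightarrow> nat \<Rightarrow> real" where
  "best R S k = Max {(\<Sum>j\<in>S. R j (x j)) | x. x \<in> S \<rightarrow>\<^sub>E {0,1,2} \<and> (\<Sum>j\<in>S. x j) = k}"

definition sum_largest :: "nat \<Rightarrow> real multiset \<Rightarrow> real" where
  "sum_largest k M = sum_list (take k (rev (sorted_list_of_multiset M)))"

end

theory Submission
  imports Defs "HOL-Combinatorics.List_Permutation"
begin


lemma lp_bound:
  fixes w c :: "'a \<Rightarrow> real"
  assumes fin: "finite I" and TI: "T \<subseteq> I" and w01: "\<forall>i\<in>I. 0 \<le> w i \<and> w i \<le> 1"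
    and ws: "(\<Sum>i\<in>I. w i) = real (card T)"
    and ord: "\<forall>i\<in>T. \<forall>j\<in>I-T. c j \<le> c i"
  shows "(\<Sum>i\<in>I. w i * c i) \<le> (\<Sum>i\<in>T. c i)"
proof (cases "T = {}")
  case True
  then have "\<forall>i\<in>I. w i = 0" using ws w01 fin sum_nonneg_eq_0_iff by (metis card.empty of_nat_0)
  then show ?thesis using True by simp
next
  case False
  define th where "th = Min (c ` T)"
  have fT: "finite T" using fin TI finite_subset by blast
  have h1: "\<forall>i\<in>T. th \<le> c i" using fT th_def by simp
  have "th \<in> c ` T" unfolding th_def using fT False by (intro Min_in) auto
  then obtain t where t: "t \<in> T" "c t = th" by blast
  have h2: "\<forall>j\<in>I-T. c j \<le> th" using ord t by blast
  have "0 \<le> (\<Sum>i\<in>I. ((if i\<in>T then 1 else 0) - w i) * (c i - th))"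
  proof (rule sum_nonneg)
    fix i assume i: "i \<in> I"
    show "0 \<le> ((if i\<in>T then 1 else 0) - w i) * (c i - th)"
    proof (cases "i \<in> T")
      case True then show ?thesis using h1 w01 i by simp
    next
      case False then show ?thesis using h2 w01 i by (simp add: mult_nonneg_nonpos)
    qed
  qed
  also have "\<dots> = (\<Sum>i\<in>I. (if i\<in>T then c i else 0)) - (\<Sum>i\<in>I. w i * c i)
      - th * ((\<Sum>i\<in>I. (if i\<in>T then 1 else 0)) - (\<Sum>i\<in>I. w i))"
  proof -
    have "\<And>i. ((if i\<in>T then 1 else 0) - w i) * (c i - th) = (if i\<in>T then c i else 0) - w i * c i - th * ((if i\<in>T then 1 else 0) - w i)"
      by (simp add: algebra_simps)
    then show ?thesis by (simp add: sum_subtractf sum_distrib_left right_diff_distrib)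
  qed
  also have "(\<Sum>i\<in>I. (if i\<in>T then c i else 0)) = (\<Sum>i\<in>T. c i)"
    using sum.inter_restrict[OF fin, of c T] TI by (simp add: Int_absorb1 inf.absorb2)
  also have "(\<Sum>i\<in>I. (if i\<in>T then (1::real) else 0)) = real (card T)"
    using sum.inter_restrict[OF fin, of "\<lambda>_. (1::real)" T] TI by (simp add: inf.absorb2)
  finally show ?thesis using ws by simp
qed

lemma best_fin:
  assumes "finite S"
  shows "finite {(\<Sum>j\<in>S. R j (x j)) | x. x \<in> S \<rightarrow>\<^sub>E {0,1,2::nat} \<and> (\<Sum>j\<in>S. x j) = k}"
proof -
  have "{(\<Sum>j\<in>S. R j (x j)) | x. x \<in> S \<rightarrow>\<^sub>E {0,1,2::nat} \<and> (\<Sum>j\<in>S. x j) = k}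
     = (\<lambda>x. \<Sum>j\<in>S. R j (x j)) ` {x \<in> S \<rightarrow>\<^sub>E {0,1,2::nat}. (\<Sum>j\<in>S. x j) = k}" by auto
  then show ?thesis using assms by (simp add: finite_PiE)
qed

lemma best_ge:
  assumes "finite S" "x \<in> S \<rightarrow>\<^sub>E {0,1,2}" "(\<Sum>j\<in>S. x j) = k"
  shows "(\<Sum>j\<in>S. R j (x j)) \<le> best R S k"
  unfolding best_def by (rule Max_ge[OF best_fin[OF assms(1)]]) (use assms in auto)

lemma best_attained:
  assumes "finite S" "x0 \<in> S \<rightarrow>\<^sub>E {0,1,2}" "(\<Sum>j\<in>S. x0 j) = k"
  obtains x where "x \<in> S \<rightarrow>\<^sub>E {0,1,2}" "(\<Sum>j\<in>S. x j) = k" "best R S k = (\<Sum>j\<in>S. R j (x j))"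
proof -
  have "best R S k \<in> {(\<Sum>j\<in>S. R j (x j)) | x. x \<in> S \<rightarrow>\<^sub>E {0,1,2::nat} \<and> (\<Sum>j\<in>S. x j) = k}"
    unfolding best_def by (rule Max_in[OF best_fin[OF assms(1)]]) (use assms in auto)
  then show ?thesis using that by auto
qed


lemma sum_restr:
  fixes f :: "'a \<Rightarrow> 'b::comm_monoid_add"
  assumes "finite I" "T \<subseteq> I"
  shows "(\<Sum>i\<in>I. if i \<in> T then f i else 0) = sum f T"
  using sum.inter_restrict[OF assms(1), of f T] assms(2) by (simp add: inf.absorb2)

lemma construct:
  fixes \<sigma> :: "nat \<Rightarrow> nat" and R :: "nat \<Rightarrow> nat \<Rightarrow> real"
  assumes bij: "bij_betw \<sigma> {1..N} B" and T: "T \<subseteq> {1..N}" and P: "P \<subseteq> {1..N}" and TP: "T \<inter> P = {}"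
    and R0: "\<forall>j\<in>B. R j 0 = 0"
  shows "\<exists>x \<in> B \<rightarrow>\<^sub>E {0,1,2}. (\<Sum>j\<in>B. x j) = 2 * card T + card P
     \<and> (\<Sum>j\<in>B. R j (x j)) = (\<Sum>i\<in>T. R (\<sigma> i) 2) + (\<Sum>i\<in>P. R (\<sigma> i) 1)"
proof -
  define h :: "nat \<Rightarrow> nat" where "h i = (if i \<in> T then 2 else if i \<in> P then 1 else 0)" for i
  define x where "x = restrict (\<lambda>j. h (inv_into {1..N} \<sigma> j)) B"
  have inj: "inj_on \<sigma> {1..N}" using bij bij_betw_def by blast
  have xs: "x (\<sigma> i) = h i" if "i \<in> {1..N}" for i
    using that bij inj unfolding x_def by (auto simp: bij_betw_def inv_into_f_f)
  have xE: "x \<in> B \<rightarrow>\<^sub>E {0,1,2}" unfolding x_def h_def by auto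
  have s1: "(\<Sum>j\<in>B. x j) = (\<Sum>i\<in>{1..N}. x (\<sigma> i))"
    using sum.reindex_bij_betw[OF bij, of x] by simp
  also have "\<dots> = (\<Sum>i\<in>{1..N}. (if i \<in> T then 2 else 0) + (if i \<in> P then 1 else 0))"
    by (rule sum.cong) (use xs TP in \<open>auto simp: h_def\<close>)
  also have "\<dots> = 2 * card T + card P"
    using sum_restr[OF _ T, of "\<lambda>_. 2::nat"] sum_restr[OF _ P, of "\<lambda>_. 1::nat"]
    by (simp add: sum.distrib)
  finally have sx: "(\<Sum>j\<in>B. x j) = 2 * card T + card P" .
  have "(\<Sum>j\<in>B. R j (x j)) = (\<Sum>i\<in>{1..N}. R (\<sigma> i) (x (\<sigma> i)))"
    using sum.reindex_bij_betw[OF bij, of "\<lambda>j. R j (x j)"] by simp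
  also have "\<dots> = (\<Sum>i\<in>{1..N}. (if i \<in> T then R (\<sigma> i) 2 else 0) + (if i \<in> P then R (\<sigma> i) 1 else 0))"
  proof (rule sum.cong)
    fix i assume i: "i \<in> {1..N}"
    have "\<sigma> i \<in> B" using i bij bij_betwE by blast
    then show "R (\<sigma> i) (x (\<sigma> i)) = (if i \<in> T then R (\<sigma> i) 2 else 0) + (if i \<in> P then R (\<sigma> i) 1 else 0)"
      using xs[OF i] TP R0 by (auto simp: h_def)
  qed simp
  also have "\<dots> = (\<Sum>i\<in>T. R (\<sigma> i) 2) + (\<Sum>i\<in>P. R (\<sigma> i) 1)"
    using sum_restr[OF _ T, of "\<lambda>i. R (\<sigma> i) 2"] sum_restr[OF _ P, of "\<lambda>i. R (\<sigma> i) 1"]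
    by (simp add: sum.distrib)
  finally show ?thesis using sx xE by blast
qed

lemma pointwise_conv:
  assumes "y \<in> {0,1,2::nat}" "R j 0 = 0" "alpha R j \<le> beta R j"
  shows "R j y \<le> real y / 2 * R j 2"
  using assms by (auto simp: alpha_def beta_def)


lemma even_case:
  fixes \<sigma> :: "nat \<Rightarrow> nat" and R :: "nat \<Rightarrow> nat \<Rightarrow> real"
  assumes bij: "bij_betw \<sigma> {1..N} B"
    and R0: "\<forall>j\<in>B. R j 0 = 0" and conv: "\<forall>j\<in>B. alpha R j \<le> beta R j"
    and ord: "\<forall>i j. 1 \<le> i \<and> i \<le> j \<and> j \<le> N \<longrightarrow> R (\<sigma> j) 2 \<le> R (\<sigma> i) 2"
    and m: "m \<le> N"
  shows "best R B (2*m) = (\<Sum>i=1..m. R (\<sigma> i) 2)"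
proof -
  have finB: "finite B" using bij bij_betw_finite by blast
  obtain x0 where x0: "x0 \<in> B \<rightarrow>\<^sub>E {0,1,2}" "(\<Sum>j\<in>B. x0 j) = 2 * m"
      "(\<Sum>j\<in>B. R j (x0 j)) = (\<Sum>i=1..m. R (\<sigma> i) 2)"
  proof -
    have "\<exists>x \<in> B \<rightarrow>\<^sub>E {0,1,2}. (\<Sum>j\<in>B. x j) = 2 * card {1..m} + card ({}::nat set)
     \<and> (\<Sum>j\<in>B. R j (x j)) = (\<Sum>i\<in>{1..m}. R (\<sigma> i) 2) + (\<Sum>i\<in>{}. R (\<sigma> i) 1)"
      using m R0 by (intro construct[OF bij]) auto
    then show ?thesis using that by auto
  qed
  obtain x where x: "x \<in> B \<rightarrow>\<^sub>E {0,1,2}" "(\<Sum>j\<in>B. x j) = 2*m" "best R B (2*m) = (\<Sum>j\<in>B. R j (x j))"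
    using best_attained[OF finB x0(1,2)] by blast
  have "(\<Sum>j\<in>B. R j (x j)) = (\<Sum>i\<in>{1..N}. R (\<sigma> i) (x (\<sigma> i)))"
    using sum.reindex_bij_betw[OF bij, of "\<lambda>j. R j (x j)"] by simp
  also have "\<dots> \<le> (\<Sum>i\<in>{1..N}. real (x (\<sigma> i)) / 2 * R (\<sigma> i) 2)"
  proof (rule sum_mono)
    fix i assume i: "i \<in> {1..N}"
    have si: "\<sigma> i \<in> B" using i bij bij_betwE by blast
    then have "x (\<sigma> i) \<in> {0,1,2}" by (rule PiE_mem[OF x(1)])
    then show "R (\<sigma> i) (x (\<sigma> i)) \<le> real (x (\<sigma> i)) / 2 * R (\<sigma> i) 2"
      using si R0 conv by (intro pointwise_conv) auto
  qed
  also have "\<dots> \<le> (\<Sum>i\<in>{1..m}. R (\<sigma> i) 2)"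
  proof (rule lp_bound)
    show "{1..m} \<subseteq> {1..N}" using m by auto
    show "\<forall>i\<in>{1..N}. 0 \<le> real (x (\<sigma> i)) / 2 \<and> real (x (\<sigma> i)) / 2 \<le> 1"
    proof
      fix i assume i: "i \<in> {1..N}"
      have si: "\<sigma> i \<in> B" using i bij bij_betwE by blast
      then have "x (\<sigma> i) \<in> {0,1,2}" by (rule PiE_mem[OF x(1)])
      then show "0 \<le> real (x (\<sigma> i)) / 2 \<and> real (x (\<sigma> i)) / 2 \<le> 1" by auto
    qed
    have "(\<Sum>i\<in>{1..N}. real (x (\<sigma> i)) / 2) = real (\<Sum>i\<in>{1..N}. x (\<sigma> i)) / 2"
      by (simp add: sum_divide_distrib)
    also have "(\<Sum>i\<in>{1..N}. x (\<sigma> i)) = 2*m"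
      using sum.reindex_bij_betw[OF bij, of x] x(2) by simp
    finally show "(\<Sum>i\<in>{1..N}. real (x (\<sigma> i)) / 2) = real (card {1..m})" by simp
    show "\<forall>i\<in>{1..m}. \<forall>j\<in>{1..N} - {1..m}. R (\<sigma> j) 2 \<le> R (\<sigma> i) 2"
    proof (intro ballI)
      fix i j assume "i \<in> {1..m}" "j \<in> {1..N} - {1..m}"
      then have "1 \<le> i \<and> i \<le> j \<and> j \<le> N" by auto
      then show "R (\<sigma> j) 2 \<le> R (\<sigma> i) 2" using ord by blast
    qed
  qed simp
  finally have "best R B (2*m) \<le> (\<Sum>i=1..m. R (\<sigma> i) 2)" using x(3) by simp
  moreover have "(\<Sum>i=1..m. R (\<sigma> i) 2) \<le> best R B (2*m)"
    using best_ge[OF finB x0(1,2), of R] x0(3) by simp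
  ultimately show ?thesis by linarith
qed


lemma odd_case:
  fixes \<sigma> :: "nat \<Rightarrow> nat" and R :: "nat \<Rightarrow> nat \<Rightarrow> real"
  assumes bij: "bij_betw \<sigma> {1..N} B"
    and R0: "\<forall>j\<in>B. R j 0 = 0" and conv: "\<forall>j\<in>B. alpha R j \<le> beta R j"
    and ord: "\<forall>i j. 1 \<le> i \<and> i \<le> j \<and> j \<le> N \<longrightarrow> R (\<sigma> j) 2 \<le> R (\<sigma> i) 2"
    and m: "m + 1 \<le> N"
  shows "ereal (best R B (2*m+1)) = max (ereal (\<Sum>i=1..m. R (\<sigma> i) 2) + (SUP i\<in>{m+2..N}. ereal (alpha R (\<sigma> i))))
           (ereal ((\<Sum>i=1..m+1. R (\<sigma> i) 2) - Min ((\<lambda>i. beta R (\<sigma> i)) ` {1..m+1})))"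
proof -
  have finB: "finite B" using bij bij_betw_finite by blast
  define I where "I = {1..N}"
  have sB: "\<sigma> i \<in> B" if "i \<in> I" for i using that bij bij_betwE I_def by blast
  have L1: "(\<Sum>i=1..m. R (\<sigma> i) 2) + alpha R (\<sigma> i) \<le> best R B (2*m+1)" if i: "i \<in> {m+2..N}" for i
  proof -
    have "\<exists>x \<in> B \<rightarrow>\<^sub>E {0,1,2}. (\<Sum>j\<in>B. x j) = 2 * card {1..m} + card {i}
     \<and> (\<Sum>j\<in>B. R j (x j)) = (\<Sum>i\<in>{1..m}. R (\<sigma> i) 2) + (\<Sum>i\<in>{i}. R (\<sigma> i) 1)"
      using m R0 i by (intro construct[OF bij]) auto
    then obtain x where x: "x \<in> B \<rightarrow>\<^sub>E {0,1,2}" "(\<Sum>j\<in>B. x j) = 2*m+1"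
      "(\<Sum>j\<in>B. R j (x j)) = (\<Sum>i\<in>{1..m}. R (\<sigma> i) 2) + R (\<sigma> i) 1" by auto
    show ?thesis using best_ge[OF finB x(1,2), of R] x(3) by (simp add: alpha_def)
  qed
  have L2: "(\<Sum>i=1..m+1. R (\<sigma> i) 2) - beta R (\<sigma> i) \<le> best R B (2*m+1)" if i: "i \<in> {1..m+1}" for i
  proof -
    have "\<exists>x \<in> B \<rightarrow>\<^sub>E {0,1,2}. (\<Sum>j\<in>B. x j) = 2 * card ({1..m+1} - {i}) + card {i}
     \<and> (\<Sum>j\<in>B. R j (x j)) = (\<Sum>i\<in>{1..m+1} - {i}. R (\<sigma> i) 2) + (\<Sum>i\<in>{i}. R (\<sigma> i) 1)"
      using m R0 i by (intro construct[OF bij]) auto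
    moreover have "card ({1..m+1} - {i}) = m" using i by simp
    moreover have "(\<Sum>i\<in>{1..m+1} - {i}. R (\<sigma> i) 2) = (\<Sum>i=1..m+1. R (\<sigma> i) 2) - R (\<sigma> i) 2"
      using i by (simp add: sum_diff1)
    ultimately obtain x where x: "x \<in> B \<rightarrow>\<^sub>E {0,1,2}" "(\<Sum>j\<in>B. x j) = 2*m+1"
      "(\<Sum>j\<in>B. R j (x j)) = (\<Sum>i=1..m+1. R (\<sigma> i) 2) - R (\<sigma> i) 2 + R (\<sigma> i) 1" by auto
    show ?thesis using best_ge[OF finB x(1,2), of R] x(3) by (simp add: beta_def)
  qed
  have "\<exists>x \<in> B \<rightarrow>\<^sub>E {0,1,2}. (\<Sum>j\<in>B. x j) = 2 * card {1..m} + card {m+1}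
     \<and> (\<Sum>j\<in>B. R j (x j)) = (\<Sum>i\<in>{1..m}. R (\<sigma> i) 2) + (\<Sum>i\<in>{m+1}. R (\<sigma> i) 1)"
    using m R0 by (intro construct[OF bij]) auto
  then obtain x0 where x0: "x0 \<in> B \<rightarrow>\<^sub>E {0,1,2}" "(\<Sum>j\<in>B. x0 j) = 2*m+1" by auto
  obtain x where x: "x \<in> B \<rightarrow>\<^sub>E {0,1,2}" "(\<Sum>j\<in>B. x j) = 2*m+1" "best R B (2*m+1) = (\<Sum>j\<in>B. R j (x j))"
    using best_attained[OF finB x0(1,2)] by blast
  define y where "y i = x (\<sigma> i)" for i
  have y012: "y i \<in> {0,1,2}" if "i \<in> I" for i unfolding y_def using PiE_mem[OF x(1) sB[OF that]] .
  have finI: "finite I" unfolding I_def by simp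
  have sumy: "(\<Sum>i\<in>I. y i) = 2*m+1"
    using sum.reindex_bij_betw[OF bij, of x] x(2) by (simp add: y_def I_def)
  have val: "best R B (2*m+1) = (\<Sum>i\<in>I. R (\<sigma> i) (y i))"
    using sum.reindex_bij_betw[OF bij, of "\<lambda>j. R j (x j)"] x(3) by (simp add: y_def I_def)
  obtain p where p: "p \<in> I" "y p = 1"
  proof (rule ccontr)
    assume "\<not> thesis"
    then have "\<forall>i\<in>I. y i \<noteq> 1" using that by blast
    then have "\<forall>i\<in>I. 2 dvd y i" using y012 by fastforce
    then have "2 dvd (\<Sum>i\<in>I. y i)" by (simp add: dvd_sum)
    then show False using sumy by simp
  qed
  have key: "best R B (2*m+1) \<le> alpha R (\<sigma> p) - real t0 * R (\<sigma> p) 2 + (\<Sum>i=1..m+t0. R (\<sigma> i) 2)"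
    if t0: "t0 \<le> 1" for t0 :: nat
  proof -
    define w where "w i = (if i = p then real t0 else real (y i) / 2)" for i
    have "best R B (2*m+1) = R (\<sigma> p) (y p) + (\<Sum>i\<in>I-{p}. R (\<sigma> i) (y i))"
      using val sum.remove[OF finI p(1), of "\<lambda>i. R (\<sigma> i) (y i)"] by simp
    also have "(\<Sum>i\<in>I-{p}. R (\<sigma> i) (y i)) \<le> (\<Sum>i\<in>I-{p}. real (y i) / 2 * R (\<sigma> i) 2)"
    proof (rule sum_mono)
      fix i assume i: "i \<in> I - {p}"
      then show "R (\<sigma> i) (y i) \<le> real (y i) / 2 * R (\<sigma> i) 2"
        using y012[of i] sB[of i] R0 conv by (intro pointwise_conv) auto
    qed
    also have "(\<Sum>i\<in>I-{p}. real (y i) / 2 * R (\<sigma> i) 2) = (\<Sum>i\<in>I. w i * R (\<sigma> i) 2) - real t0 * R (\<sigma> p) 2"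
    proof -
      have "(\<Sum>i\<in>I. w i * R (\<sigma> i) 2) = w p * R (\<sigma> p) 2 + (\<Sum>i\<in>I-{p}. w i * R (\<sigma> i) 2)"
        using sum.remove[OF finI p(1)] by blast
      moreover have "(\<Sum>i\<in>I-{p}. w i * R (\<sigma> i) 2) = (\<Sum>i\<in>I-{p}. real (y i) / 2 * R (\<sigma> i) 2)"
        by (rule sum.cong) (auto simp: w_def)
      ultimately show ?thesis by (simp add: w_def)
    qed
    also have "(\<Sum>i\<in>I. w i * R (\<sigma> i) 2) \<le> (\<Sum>i\<in>{1..m+t0}. R (\<sigma> i) 2)"
    proof (rule lp_bound[OF finI])
      show "{1..m+t0} \<subseteq> I" using m t0 I_def by auto
      show "\<forall>i\<in>I. 0 \<le> w i \<and> w i \<le> 1"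
      proof
        fix i assume i: "i \<in> I"
        show "0 \<le> w i \<and> w i \<le> 1" using y012[OF i] t0 by (auto simp: w_def)
      qed
      have s1: "(\<Sum>i\<in>I. y i) = y p + (\<Sum>i\<in>I-{p}. y i)"
        using sum.remove[OF finI p(1)] by blast
      have s2: "(\<Sum>i\<in>I-{p}. y i) = 2*m" using s1 sumy p(2) by simp
      have "(\<Sum>i\<in>I. w i) = w p + (\<Sum>i\<in>I-{p}. w i)"
        using sum.remove[OF finI p(1)] by blast
      also have "(\<Sum>i\<in>I-{p}. w i) = (\<Sum>i\<in>I-{p}. real (y i) / 2)"
        by (rule sum.cong) (auto simp: w_def)
      also have "\<dots> = real (\<Sum>i\<in>I-{p}. y i) / 2" by (simp add: sum_divide_distrib)
      finally show "(\<Sum>i\<in>I. w i) = real (card {1..m+t0})" using s2 by (simp add: w_def)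
      show "\<forall>i\<in>{1..m+t0}. \<forall>j\<in>I - {1..m+t0}. R (\<sigma> j) 2 \<le> R (\<sigma> i) 2"
      proof (intro ballI)
        fix i j assume "i \<in> {1..m+t0}" "j \<in> I - {1..m+t0}"
        then have "1 \<le> i \<and> i \<le> j \<and> j \<le> N" by (auto simp: I_def)
        then show "R (\<sigma> j) 2 \<le> R (\<sigma> i) 2" using ord by blast
      qed
    qed
    finally show ?thesis using p(2) by (simp add: alpha_def)
  qed
  define M where "M = max (ereal (\<Sum>i=1..m. R (\<sigma> i) 2) + (SUP i\<in>{m+2..N}. ereal (alpha R (\<sigma> i))))
           (ereal ((\<Sum>i=1..m+1. R (\<sigma> i) 2) - Min ((\<lambda>i. beta R (\<sigma> i)) ` {1..m+1})))"
  have up: "ereal (best R B (2*m+1)) \<le> M"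
  proof (cases "m + 2 \<le> p")
    case True
    have pin: "p \<in> {m+2..N}" using True p(1) I_def by auto
    have "ereal (best R B (2*m+1)) \<le> ereal (\<Sum>i=1..m. R (\<sigma> i) 2) + ereal (alpha R (\<sigma> p))"
      using key[of 0] by simp
    also have "\<dots> \<le> ereal (\<Sum>i=1..m. R (\<sigma> i) 2) + (SUP i\<in>{m+2..N}. ereal (alpha R (\<sigma> i)))"
      by (rule add_left_mono) (rule SUP_upper[OF pin])
    finally show ?thesis unfolding M_def by (rule max.coboundedI1)
  next
    case False
    have pin: "p \<in> {1..m+1}" using False p(1) I_def by auto
    have "Min ((\<lambda>i. beta R (\<sigma> i)) ` {1..m+1}) \<le> beta R (\<sigma> p)"
      using pin by (intro Min_le) auto
    then have "best R B (2*m+1) \<le> (\<Sum>i=1..m+1. R (\<sigma> i) 2) - Min ((\<lambda>i. beta R (\<sigma> i)) ` {1..m+1})"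
      using key[of 1] by (simp add: alpha_def beta_def)
    then show ?thesis unfolding M_def by (intro max.coboundedI2) simp
  qed
  have lo: "M \<le> ereal (best R B (2*m+1))"
    unfolding M_def
  proof (rule max.boundedI)
    have "(SUP i\<in>{m+2..N}. ereal (alpha R (\<sigma> i))) \<le> ereal (best R B (2*m+1) - (\<Sum>i=1..m. R (\<sigma> i) 2))"
      by (rule SUP_least) (use L1 in \<open>fastforce\<close>)
    then have "ereal (\<Sum>i=1..m. R (\<sigma> i) 2) + (SUP i\<in>{m+2..N}. ereal (alpha R (\<sigma> i)))
        \<le> ereal (\<Sum>i=1..m. R (\<sigma> i) 2) + ereal (best R B (2*m+1) - (\<Sum>i=1..m. R (\<sigma> i) 2))"
      by (rule add_left_mono)
    then show "ereal (\<Sum>i=1..m. R (\<sigma> i) 2) + (SUP i\<in>{m+2..N}. ereal (alpha R (\<sigma> i))) \<le> ereal (best R B (2*m+1))"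
      by simp
  next
    have "Min ((\<lambda>i. beta R (\<sigma> i)) ` {1..m+1}) \<in> (\<lambda>i. beta R (\<sigma> i)) ` {1..m+1}"
      by (intro Min_in) auto
    then obtain i0 where i0: "i0 \<in> {1..m+1}" "Min ((\<lambda>i. beta R (\<sigma> i)) ` {1..m+1}) = beta R (\<sigma> i0)" by blast
    show "ereal ((\<Sum>i=1..m+1. R (\<sigma> i) 2) - Min ((\<lambda>i. beta R (\<sigma> i)) ` {1..m+1})) \<le> ereal (best R B (2*m+1))"
      using L2[OF i0(1)] i0(2) by simp
  qed
  from antisym[OF up lo] show ?thesis unfolding M_def .
qed



lemma sigma_val:
  fixes R :: "nat \<Rightarrow> nat \<Rightarrow> real" and x :: "nat \<Rightarrow> nat"
  assumes finA: "finite A" and x: "x \<in> A \<rightarrow>\<^sub>E {0,1,2}" and R0: "\<forall>j\<in>A. R j 0 = 0"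
    and v: "\<And>j l. v (j,l) = (if l = 1 then alpha R j else beta R j)"
  shows "(\<Sum>j\<in>A. R j (x j)) = sum v (Sigma A (\<lambda>j. {1..x j}))"
    and "card (Sigma A (\<lambda>j. {1..x j})) = (\<Sum>j\<in>A. x j)"
proof -
  have "(\<Sum>j\<in>A. R j (x j)) = (\<Sum>j\<in>A. \<Sum>l\<in>{1..x j}. v (j,l))"
  proof (rule sum.cong)
    fix j assume j: "j \<in> A"
    have "x j \<in> {0,1,2}" using PiE_mem[OF x j] .
    then show "R j (x j) = (\<Sum>l\<in>{1..x j}. v (j,l))"
      using R0 j by (auto simp: v alpha_def beta_def numeral_2_eq_2 atLeastAtMostSuc_conv)
  qed simp
  also have "\<dots> = sum v (Sigma A (\<lambda>j. {1..x j}))"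
    using sum.Sigma[OF finA, of "\<lambda>j. {1..x j}" "\<lambda>j l. v (j,l)"] by (simp add: case_prod_beta')
  finally show "(\<Sum>j\<in>A. R j (x j)) = sum v (Sigma A (\<lambda>j. {1..x j}))" .
  show "card (Sigma A (\<lambda>j. {1..x j})) = (\<Sum>j\<in>A. x j)" using finA by simp
qed

lemma part1:
  fixes R :: "nat \<Rightarrow> nat \<Rightarrow> real" and A :: "nat set"
  assumes finA: "finite A" and R0: "\<forall>j\<in>A. R j 0 = 0" and conc: "\<forall>j\<in>A. beta R j < alpha R j"
    and k: "k \<le> 2 * card A"
  shows "best R A k = sum_largest k (image_mset (alpha R) (mset_set A) + image_mset (beta R) (mset_set A))"
proof -
  define v :: "nat \<times> nat \<Rightarrow> real" where "v p = (if snd p = 1 then alpha R (fst p) else beta R (fst p))" for p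
  have v: "\<And>j l. v (j,l) = (if l = 1 then alpha R j else beta R j)" by (simp add: v_def)
  define Mu where "Mu = image_mset (alpha R) (mset_set A) + image_mset (beta R) (mset_set A)"
  define LA where "LA = sorted_list_of_set A"
  define E0 where "E0 = map (\<lambda>j. (j,1::nat)) LA @ map (\<lambda>j. (j,2::nat)) LA"
  define N2 where "N2 = 2 * card A"
  have dE0: "distinct E0" unfolding E0_def LA_def by (auto simp: distinct_map inj_on_def)
  have sE0: "set E0 = A \<times> {1,2}" unfolding E0_def LA_def using finA by auto
  have lE0: "length E0 = N2" unfolding E0_def LA_def N2_def using finA by simp
  have mE0: "mset (map v E0) = Mu"
    unfolding E0_def Mu_def LA_def using finA
    by (simp add: v_def comp_def flip: sorted_list_of_mset_set)
  define L where "L = rev (sorted_list_of_multiset Mu)"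
  have mL: "mset L = Mu" unfolding L_def by simp
  have lL: "length L = N2" using mL mE0 lE0 by (metis length_map mset_eq_length)
  obtain f where f: "bij_betw f {..<length L} {..<length (map v E0)}" "\<forall>i<length L. L ! i = map v E0 ! f i"
    using permutation_Ex_bij[of L "map v E0"] mL mE0 by auto
  define e where "e = (!) E0 \<circ> f"
  have be: "bij_betw e {..<N2} (A \<times> {1,2})"
    unfolding e_def using f(1) lL lE0 bij_betw_nth[OF dE0 _ sE0[symmetric]]
    by (intro bij_betw_trans) auto
  have Le: "L ! q = v (e q)" if "q < N2" for q
    using f that lL lE0 bij_betwE[OF f(1)] by (simp add: e_def)
  have srt: "L ! q' \<le> L ! q" if "q \<le> q'" "q' < N2" for q q'
  proof -
    have ls: "length (sorted_list_of_multiset Mu) = N2" using lL L_def by simp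
    have "L ! q' = sorted_list_of_multiset Mu ! (N2 - Suc q')" "L ! q = sorted_list_of_multiset Mu ! (N2 - Suc q)"
      using that ls unfolding L_def by (simp_all add: rev_nth)
    moreover have "sorted_list_of_multiset Mu ! (N2 - Suc q') \<le> sorted_list_of_multiset Mu ! (N2 - Suc q)"
      by (rule sorted_nth_mono) (use that ls in auto)
    ultimately show ?thesis by simp
  qed
  have SL: "sum_largest k Mu = (\<Sum>q<k. L ! q)"
    unfolding sum_largest_def L_def[symmetric] using k lL N2_def
    by (simp add: sum_list_sum_nth atLeast0LessThan)
  have kN: "k \<le> N2" using k N2_def by simp
  have finI: "finite {..<N2}" by simp
  define Sel where "Sel = e ` {..<k}"
  have SelA: "Sel \<subseteq> A \<times> {1,2}"
  proof -
    have "e ` {..<k} \<subseteq> e ` {..<N2}" using kN by (intro image_mono) auto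
    then show ?thesis using bij_betw_imp_surj_on[OF be] unfolding Sel_def by simp
  qed
  have clos: "(j,1) \<in> Sel" if j2: "(j,2) \<in> Sel" for j
  proof -
    obtain q where q: "q < k" "e q = (j,2)" using j2 Sel_def by auto
    have "(j,1) \<in> A \<times> {1,2}" using SelA j2 by auto
    then have "(j,1) \<in> e ` {..<N2}" using bij_betw_imp_surj_on[OF be] by simp
    then obtain q' where q': "q' < N2" "e q' = (j,1)" by auto
    show ?thesis
    proof (cases "q' < k")
      case True then have "q' \<in> {..<k}" by simp
      then have "e q' \<in> e ` {..<k}" by (rule imageI)
      then show ?thesis using q' Sel_def by simp
    next
      case False
      then have "L ! q' \<le> L ! q" using q q' by (intro srt) auto
      then have "alpha R j \<le> beta R j" using Le q q' kN by (simp add: v)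
      moreover have "j \<in> A" using SelA j2 by auto
      moreover have "beta R j < alpha R j" using conc \<open>j \<in> A\<close> by blast
      ultimately have False by linarith
      then show ?thesis ..
    qed
  qed
  define x :: "nat \<Rightarrow> nat" where "x j = (if j \<in> A then (if (j,2) \<in> Sel then 2 else if (j,1) \<in> Sel then 1 else 0) else undefined)" for j :: nat
  have xE: "x \<in> A \<rightarrow>\<^sub>E {0,1,2}"
  proof (rule PiE_I)
    fix j :: nat assume "j \<in> A" then show "x j \<in> {0,1,2}" by (simp add: x_def)
  next
    fix j :: nat assume "j \<notin> A" then show "x j = undefined" by (simp add: x_def)
  qed
  have SigSel: "Sigma A (\<lambda>j. {1..x j}) = Sel"
  proof (intro set_eqI iffI)
    fix p assume "p \<in> Sigma A (\<lambda>j. {1..x j})"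
    then obtain j l where p: "p = (j,l)" "j \<in> A" "1 \<le> l" "l \<le> x j" by auto
    show "p \<in> Sel"
    proof (cases "(j,2) \<in> Sel")
      case True
      then have "x j = 2" using p(2) by (simp add: x_def)
      then have "l = 1 \<or> l = 2" using p(3,4) by auto
      then show ?thesis using True clos[OF True] p(1) by auto
    next
      case False
      then have "x j = (if (j,1) \<in> Sel then 1 else 0)" using p(2) by (simp add: x_def)
      then have "(j,1) \<in> Sel" "l = 1" using p(3,4) by (auto split: if_splits)
      then show ?thesis using p(1) by simp
    qed
  next
    fix p assume "p \<in> Sel"
    obtain j l where pj: "p = (j,l)" by (cases p)
    then have p: "j \<in> A" "l \<in> {1,2}" "(j,l) \<in> Sel" using SelA \<open>p \<in> Sel\<close> by auto
    have "1 \<le> l \<and> l \<le> x j"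
    proof (cases "l = 1")
      case True then show ?thesis using p by (simp add: x_def)
    next
      case False then have "l = 2" using p by simp
      then show ?thesis using p by (simp add: x_def)
    qed
    then show "p \<in> Sigma A (\<lambda>j. {1..x j})" using pj p(1) by simp
  qed
  have injk: "inj_on e {..<k}" using kN by (intro inj_on_subset[OF bij_betw_imp_inj_on[OF be]]) auto
  have "(\<Sum>j\<in>A. x j) = k"
    using sigma_val(2)[OF finA xE R0 v] SigSel Sel_def card_image[OF injk] by simp
  moreover have "(\<Sum>j\<in>A. R j (x j)) = (\<Sum>q<k. L ! q)"
  proof -
    have "(\<Sum>j\<in>A. R j (x j)) = sum v Sel" using sigma_val(1)[OF finA xE R0 v] SigSel by simp
    also have "\<dots> = (\<Sum>q<k. v (e q))" unfolding Sel_def using sum.reindex[OF injk, of v] by simp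
    also have "\<dots> = (\<Sum>q<k. L ! q)" using Le kN by simp
    finally show ?thesis .
  qed
  ultimately have lo: "(\<Sum>q<k. L ! q) \<le> best R A k" using best_ge[OF finA xE, of k R] by simp
  obtain y where y: "y \<in> A \<rightarrow>\<^sub>E {0,1,2}" "(\<Sum>j\<in>A. y j) = k" "best R A k = (\<Sum>j\<in>A. R j (y j))"
    using best_attained[OF finA xE \<open>(\<Sum>j\<in>A. x j) = k\<close>] by blast
  define S2 where "S2 = Sigma A (\<lambda>j. {1..y j})"
  have S2A: "S2 \<subseteq> A \<times> {1,2}"
  proof
    fix p assume "p \<in> S2"
    then obtain j l where p: "p = (j,l)" "j \<in> A" "1 \<le> l" "l \<le> y j" unfolding S2_def by auto
    have "y j \<in> {0,1,2}" using PiE_mem[OF y(1) p(2)] .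
    then show "p \<in> A \<times> {1,2}" using p by auto
  qed
  define Q where "Q = {q \<in> {..<N2}. e q \<in> S2}"
  have bQ: "bij_betw e Q S2"
  proof (rule bij_betw_subset[OF be])
    show "Q \<subseteq> {..<N2}" unfolding Q_def by auto
    show "e ` Q = S2"
    proof (intro set_eqI iffI)
      fix p assume "p \<in> e ` Q" then show "p \<in> S2" unfolding Q_def by auto
    next
      fix p assume p: "p \<in> S2"
      then have "p \<in> e ` {..<N2}" using S2A bij_betw_imp_surj_on[OF be] by blast
      then obtain q where q: "q < N2" "p = e q" by auto
      then have "q \<in> Q" using p unfolding Q_def by simp
      then show "p \<in> e ` Q" using q(2) by (rule rev_image_eqI)
    qed
  qed
  have cQ: "card Q = k"
    using bij_betw_same_card[OF bQ] sigma_val(2)[OF finA y(1) R0 v] y(2) S2_def by simp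
  have "best R A k = sum v S2" using sigma_val(1)[OF finA y(1) R0 v] y(3) S2_def by simp
  also have "\<dots> = (\<Sum>q\<in>Q. v (e q))" using sum.reindex_bij_betw[OF bQ, of v] by simp
  also have "\<dots> = (\<Sum>q\<in>Q. L ! q)" using Le unfolding Q_def by simp
  also have "\<dots> = (\<Sum>q\<in>{..<N2}. (if q \<in> Q then 1 else 0) * L ! q)"
  proof -
    have QI: "Q \<subseteq> {..<N2}" unfolding Q_def by auto
    have "(\<Sum>q\<in>{..<N2}. (if q \<in> Q then 1 else 0) * L ! q) = (\<Sum>q\<in>{..<N2}. if q \<in> Q then L ! q else 0)"
      by (rule sum.cong) auto
    then show ?thesis using sum_restr[OF finI QI, of "\<lambda>q. L ! q"] by simp
  qed
  also have "\<dots> \<le> (\<Sum>q\<in>{..<k}. L ! q)"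
  proof (rule lp_bound[OF finI])
    show "{..<k} \<subseteq> {..<N2}" using kN by auto
    show "\<forall>i\<in>{..<N2}. 0 \<le> (if i \<in> Q then 1 else 0::real) \<and> (if i \<in> Q then 1 else 0::real) \<le> 1" by simp
    have "(\<Sum>q\<in>{..<N2}. (if q \<in> Q then 1 else 0::real)) = real (card Q)"
      using sum_restr[OF finI, of Q "\<lambda>_. 1::real"] unfolding Q_def by auto
    then show "(\<Sum>q\<in>{..<N2}. (if q \<in> Q then 1 else 0::real)) = real (card {..<k})" using cQ by simp
    show "\<forall>i\<in>{..<k}. \<forall>j\<in>{..<N2} - {..<k}. L ! j \<le> L ! i"
    proof (intro ballI)
      fix i j assume "i \<in> {..<k}" "j \<in> {..<N2} - {..<k}"
      then show "L ! j \<le> L ! i" by (intro srt) auto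
    qed
  qed
  finally have up: "best R A k \<le> (\<Sum>q<k. L ! q)" .
  show ?thesis using up lo SL Mu_def by simp
qed


theorem lemma7:
  fixes n :: nat and R :: "nat \<Rightarrow> nat \<Rightarrow> real"
  assumes R0: "\<forall>j<n. R j 0 = 0"
  shows "(\<forall>k \<le> 2 * card (setA n R).
            best R (setA n R) k
              = sum_largest k (image_mset (alpha R) (mset_set (setA n R))
                               + image_mset (beta R) (mset_set (setA n R))))
       \<and> (\<forall>\<sigma> :: nat \<Rightarrow> nat.
            bij_betw \<sigma> {1..card (setB n R)} (setB n R)
            \<and> (\<forall>i j. 1 \<le> i \<and> i \<le> j \<and> j \<le> card (setB n R) \<longrightarrow> R (\<sigma> j) 2 \<le> R (\<sigma> i) 2)
            \<longrightarrow> (\<forall>k \<le> 2 * card (setB n R).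
                  (even k \<longrightarrow> best R (setB n R) k = (\<Sum>i=1..k div 2. R (\<sigma> i) 2))
                \<and> (odd k \<longrightarrow> ereal (best R (setB n R) k)
                     = max (ereal (best R (setB n R) (k - 1))
                              + (SUP i\<in>{(k + 3) div 2..card (setB n R)}. ereal (alpha R (\<sigma> i))))
                           (ereal (best R (setB n R) (k + 1)
                              - Min ((\<lambda>i. beta R (\<sigma> i)) ` {1..(k + 1) div 2}))))))"
proof (intro conjI allI impI)
  have finA: "finite (setA n R)" by (rule finite_subset[of _ "{..<n}"]) (auto simp: setA_def)
  have R0A: "\<forall>j\<in>setA n R. R j 0 = 0" using R0 by (auto simp: setA_def)
  have concA: "\<forall>j\<in>setA n R. beta R j < alpha R j" by (auto simp: setA_def)
  fix k assume "k \<le> 2 * card (setA n R)"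
  then show "best R (setA n R) k
              = sum_largest k (image_mset (alpha R) (mset_set (setA n R))
                               + image_mset (beta R) (mset_set (setA n R)))"
    by (rule part1[OF finA R0A concA])
next
  fix \<sigma> :: "nat \<Rightarrow> nat" and k :: nat
  assume H: "bij_betw \<sigma> {1..card (setB n R)} (setB n R)
            \<and> (\<forall>i j. 1 \<le> i \<and> i \<le> j \<and> j \<le> card (setB n R) \<longrightarrow> R (\<sigma> j) 2 \<le> R (\<sigma> i) 2)"
    and k: "k \<le> 2 * card (setB n R)"
  have bij: "bij_betw \<sigma> {1..card (setB n R)} (setB n R)" using H by blast
  have ord: "\<forall>i j. 1 \<le> i \<and> i \<le> j \<and> j \<le> card (setB n R) \<longrightarrow> R (\<sigma> j) 2 \<le> R (\<sigma> i) 2" using H by blast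
  have R0B: "\<forall>j\<in>setB n R. R j 0 = 0" using R0 by (auto simp: setB_def)
  have convB: "\<forall>j\<in>setB n R. alpha R j \<le> beta R j" by (auto simp: setB_def)
  note EC = even_case[OF bij R0B convB ord]
  show "best R (setB n R) k = (\<Sum>i=1..k div 2. R (\<sigma> i) 2)" if "even k"
  proof -
    from that have kk: "k = 2 * (k div 2)" by simp
    have "k div 2 \<le> card (setB n R)" using k by simp
    from EC[OF this] kk show "best R (setB n R) k = (\<Sum>i=1..k div 2. R (\<sigma> i) 2)" by simp
  qed
  show "ereal (best R (setB n R) k)
                     = max (ereal (best R (setB n R) (k - 1))
                              + (SUP i\<in>{(k + 3) div 2..card (setB n R)}. ereal (alpha R (\<sigma> i))))
                           (ereal (best R (setB n R) (k + 1)
                              - Min ((\<lambda>i. beta R (\<sigma> i)) ` {1..(k + 1) div 2})))" if "odd k"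
  proof -
    define m where "m = k div 2"
    have h5: "k = 2*m+1" using \<open>odd k\<close> m_def by simp
    have m1: "m + 1 \<le> card (setB n R)" using k h5 by simp
    have h1: "k - 1 = 2*m" "k + 1 = 2*(m+1)" "(k + 3) div 2 = m+2" "(k + 1) div 2 = m+1"
      using h5 by simp_all
    have e1: "best R (setB n R) (2*m) = (\<Sum>i=1..m. R (\<sigma> i) 2)" using EC m1 by simp
    have e2: "best R (setB n R) (2*(m+1)) = (\<Sum>i=1..m+1. R (\<sigma> i) 2)" using EC[OF m1] .
    note O = odd_case[OF bij R0B convB ord m1]
    show "ereal (best R (setB n R) k)
                     = max (ereal (best R (setB n R) (k - 1))
                              + (SUP i\<in>{(k + 3) div 2..card (setB n R)}. ereal (alpha R (\<sigma> i))))
                           (ereal (best R (setB n R) (k + 1)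
                              - Min ((\<lambda>i. beta R (\<sigma> i)) ` {1..(k + 1) div 2})))"
      unfolding h1 e1 e2 using O h5 by simp
  qed
qed

end
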